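(* If a $\mathsf{BST}^{\otimes}$-conjunction $\Phi$ is fulfilled by a finite accessible $\otimes$-graph that admits a topological $\otimes$-order, then $\Phi$ is satisfied by a hereditarily finite set assignment (i.e. one with $\bigcup_{v}Mv\in\mathsf{HF}$).
   Context: Sets range over the von Neumann universe of well-founded sets; $\mathsf{HF}$ is the set of hereditarily finite sets. For sets $s,t$, $s\otimes t=\{\{u,v\} : u\in s,\ v\in t\}$. A $\mathsf{BST}^{\otimes}$-conjunction is a finite conjunction of literals of the forms $x=y\cup z$, $x=y\setminus z$, $x=y\otimes z$, $x\neq y$; a set assignment $M$ satisfies it if all literals are true when each variable $v$ is interpreted as $Mv$. A $\otimes$-graph $\mathcal G=(\mathcal P,\mathcal N,\mathcal T)$ consists of a set $\mathcal P$ of places, the set of nodes $\mathcal N=\mathcal P\otimes\mathcal P$ (the nonempty subsets of $\mathcal P$ with at most two elements), $\mathcal P\cap\mathcal N=\emptyset$, and a target map $\mathcal T:\mathcal N\to\mathcal P(\mathcal P)$. A source place is a place belonging to no $\mathcal T(A)$; a node $A$ is a $\otimes$-node if $\mathcal T(A)\neq\emptyset$. The accessible places form the smallest set of places containing all source places and containing $\mathcal T(A)$ whenever all places of $A$ belong to it; $\mathcal G$ is accessible if every place is accessible. A topological $\otimes$-order of $\mathcal G$ is a total order $\prec$ on $\mathcal P$ with $\max_\prec A\prec\max_\prec\mathcal T(A)$ for every $\otimes$-node $A$. A map $\mathfrak F:\mathrm{Vars}(\Phi)\to\mathcal P(\mathcal P)$ is $\mathcal G$-fulfilling for $\Phi$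 if: (a) $\mathfrak F(x)=\mathfrak F(y)\star\mathfrak F(z)$ for each conjunct $x=y\star z$, $\star\in\{\cup,\setminus\}$; (b) $\mathfrak F(x)\neq\mathfrak F(y)$ for each conjunct $x\neq y$; (c) for each conjunct $x=y\otimes z$: (c1) $\emptyset\neq\mathcal T(\{\upsilon,\zeta\})\subseteq\mathfrak F(x)$ for all $\upsilon\in\mathfrak F(y),\zeta\in\mathfrak F(z)$; (c2) $\mathfrak F(x)\subseteq\bigcup\{\mathcal T(A):A\in\mathfrak F(y)\otimes\mathfrak F(z)\}$; (c3) $\bigcup\{\mathcal T(A):A\in\mathcal N\setminus(\mathfrak F(y)\otimes\mathfrak F(z))\}\cap\mathfrak F(x)=\emptyset$. $\mathcal G$ fulfills $\Phi$ if such a map exists. *)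

theory Defs
  imports "HOL-Library.FSet"
begin

text \<open>The hereditarily finite sets HF, realised as the (well-founded, extensional)
  datatype of finite sets of hereditarily finite sets.\<close>

datatype hf = HF (elts: "hf fset")

definition hunion :: "hf \<Rightarrow> hf \<Rightarrow> hf" where
  "hunion a b = HF (elts a |\<union>| elts b)"

definition hdiff :: "hf \<Rightarrow> hf \<Rightarrow> hf" where
  "hdiff a b = HF (elts a |-| elts b)"

text \<open>s \<otimes> t = { {u,v} : u \<in> s, v \<in> t }\<close>
definition htens :: "hf \<Rightarrow> hf \<Rightarrow> hf" where
  "htens a b = HF (ffUnion ((\<lambda>u. (\<lambda>v. HF {|u, v|}) |`| elts b) |`| elts a))"

datatype 'v literal =
    LUn 'v 'v 'v     (* x = y \<union> z *)
  | LDiff 'v 'v 'v   (* x = y \<setminus> z *)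
  | LTens 'v 'v 'v   (* x = y \<otimes> z *)
  | LNeq 'v 'v       (* x \<noteq> y *)

type_synonym 'v conj = "'v literal list"

fun lit_vars :: "'v literal \<Rightarrow> 'v set" where
  "lit_vars (LUn x y z) = {x, y, z}"
| "lit_vars (LDiff x y z) = {x, y, z}"
| "lit_vars (LTens x y z) = {x, y, z}"
| "lit_vars (LNeq x y) = {x, y}"

definition Vars :: "'v conj \<Rightarrow> 'v set" where
  "Vars \<Phi> = (\<Union>l\<in>set \<Phi>. lit_vars l)"

fun hf_sat_lit :: "('v \<Rightarrow> hf) \<Rightarrow> 'v literal \<Rightarrow> bool" where
  "hf_sat_lit M (LUn x y z) = (M x = hunion (M y) (M z))"
| "hf_sat_lit M (LDiff x y z) = (M x = hdiff (M y) (M z))"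
| "hf_sat_lit M (LTens x y z) = (M x = htens (M y) (M z))"
| "hf_sat_lit M (LNeq x y) = (M x \<noteq> M y)"

definition hf_satisfies :: "('v \<Rightarrow> hf) \<Rightarrow> 'v conj \<Rightarrow> bool" where
  "hf_satisfies M \<Phi> = (\<forall>l\<in>set \<Phi>. hf_sat_lit M l)"

definition tens :: "'a set \<Rightarrow> 'a set \<Rightarrow> 'a set set" where
  "tens s t = {{u, v} | u v. u \<in> s \<and> v \<in> t}"

text \<open>A tensor-graph is given by its set of places P and target map T (on nodes);
  the nodes are P \<otimes> P, which lives in a different type than the places.\<close>

definition nodes :: "'p set \<Rightarrow> 'p set set" where
  "nodes P = tens P P"

definition tgraph :: "'p set \<Rightarrow> ('p set \<Rightarrow> 'p set) \<Rightarrow> bool" where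
  "tgraph P T = (\<forall>A\<in>nodes P. T A \<subseteq> P)"

definition source_place :: "'p set \<Rightarrow> ('p set \<Rightarrow> 'p set) \<Rightarrow> 'p \<Rightarrow> bool" where
  "source_place P T p = (p \<in> P \<and> (\<forall>A\<in>nodes P. p \<notin> T A))"

definition tens_node :: "'p set \<Rightarrow> ('p set \<Rightarrow> 'p set) \<Rightarrow> 'p set \<Rightarrow> bool" where
  "tens_node P T A = (A \<in> nodes P \<and> T A \<noteq> {})"

inductive_set accessible_places :: "'p set \<Rightarrow> ('p set \<Rightarrow> 'p set) \<Rightarrow> 'p set"
  for P T where
  src: "source_place P T p \<Longrightarrow> p \<in> accessible_places P T"
| step: "A \<in> nodes P \<Longrightarrow> (\<And>p. p \<in> A \<Longrightarrow> p \<in> accessible_places P T) \<Longrightarrow> q \<in> T A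
          \<Longrightarrow> q \<in> accessible_places P T"

definition accessible :: "'p set \<Rightarrow> ('p set \<Rightarrow> 'p set) \<Rightarrow> bool" where
  "accessible P T = (P \<subseteq> accessible_places P T)"

definition max_wrt :: "'p rel \<Rightarrow> 'p set \<Rightarrow> 'p" where
  "max_wrt r S = (THE m. m \<in> S \<and> (\<forall>s\<in>S. s = m \<or> (s, m) \<in> r))"

definition topological_order :: "'p set \<Rightarrow> ('p set \<Rightarrow> 'p set) \<Rightarrow> 'p rel \<Rightarrow> bool" where
  "topological_order P T r =
     (strict_linear_order_on P r \<and> r \<subseteq> P \<times> P \<and>
      (\<forall>A. tens_node P T A \<longrightarrow> (max_wrt r A, max_wrt r (T A)) \<in> r))"

fun fulfills_lit :: "'p set \<Rightarrow> ('p set \<Rightarrow> 'p set) \<Rightarrow> ('v \<Rightarrow> 'p set) \<Rightarrow> 'v literal \<Rightarrow> bool" where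
  "fulfills_lit P T F (LUn x y z) = (F x = F y \<union> F z)"
| "fulfills_lit P T F (LDiff x y z) = (F x = F y - F z)"
| "fulfills_lit P T F (LNeq x y) = (F x \<noteq> F y)"
| "fulfills_lit P T F (LTens x y z) =
     ((\<forall>u\<in>F y. \<forall>v\<in>F z. T {u, v} \<noteq> {} \<and> T {u, v} \<subseteq> F x) \<and>
      F x \<subseteq> \<Union>(T ` tens (F y) (F z)) \<and>
      \<Union>(T ` (nodes P - tens (F y) (F z))) \<inter> F x = {})"

definition fulfilling :: "'p set \<Rightarrow> ('p set \<Rightarrow> 'p set) \<Rightarrow> ('v \<Rightarrow> 'p set) \<Rightarrow> 'v conj \<Rightarrow> bool" where
  "fulfilling P T F \<Phi> = ((\<forall>v\<in>Vars \<Phi>. F v \<subseteq> P) \<and> (\<forall>l\<in>set \<Phi>. fulfills_lit P T F l))"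

definition graph_fulfills :: "'p set \<Rightarrow> ('p set \<Rightarrow> 'p set) \<Rightarrow> 'v conj \<Rightarrow> bool" where
  "graph_fulfills P T \<Phi> = (\<exists>F. fulfilling P T F \<Phi>)"

end

theory Submission
  imports Defs "HOL-Library.Nat_Bijection"
begin

lemma hf_eqI: "fset (elts a) = fset (elts b) \<Longrightarrow> a = b"
  by (simp add: fset_inject hf.expand)

lemma elts_hunion: "fset (elts (hunion a b)) = fset (elts a) \<union> fset (elts b)"
  by (simp add: hunion_def)
lemma elts_hdiff: "fset (elts (hdiff a b)) = fset (elts a) - fset (elts b)"
  by (simp add: hdiff_def)
lemma elts_htens: "fset (elts (htens a b)) = {HF {|u, v|} | u v. u \<in> fset (elts a) \<and> v \<in> fset (elts b)}"
  by (auto simp add: htens_def ffUnion.rep_eq fimage.rep_eq)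

definition mk :: "hf set \<Rightarrow> hf" where "mk S = HF (Abs_fset S)"
lemma elts_mk: "finite S \<Longrightarrow> fset (elts (mk S)) = S"
  by (simp add: mk_def Abs_fset_inverse)

primrec num :: "nat \<Rightarrow> hf" where
  "num 0 = HF {||}" | "num (Suc k) = HF {|num k|}"

lemma num_inj: "num k = num l \<Longrightarrow> k = l"
proof (induction k arbitrary: l)
  case 0 then show ?case by (cases l) auto
next
  case (Suc k) then show ?case by (cases l) auto
qed
declare num.simps[simp del]

definition atom :: "nat \<Rightarrow> nat \<Rightarrow> hf" where
  "atom j i = HF {|num 0, num 1, num 2, num (prod_encode (j,i) + 3)|}"

lemma atom_inj: "atom j i = atom j' i' \<Longrightarrow> j = j' \<and> i = i'"
proof -
  assume "atom j i = atom j' i'"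
  then have "fset {|num 0, num 1, num 2, num (prod_encode (j,i) + 3)|} = fset {|num 0, num 1, num 2, num (prod_encode (j',i') + 3)|}"
    by (simp add: atom_def)
  then have "num (prod_encode (j,i) + 3) \<in> {num 0, num 1, num 2, num (prod_encode (j',i') + 3)}" by auto
  then have "prod_encode (j,i) + 3 = prod_encode (j',i') + 3" by (auto dest!: num_inj[of "prod_encode (j,i) + 3"])
  then show ?thesis by simp
qed

lemma atom_not_pair: "atom j i \<noteq> HF {|u, v|}"
proof
  assume "atom j i = HF {|u, v|}"
  then have "fset {|num 0, num 1, num 2, num (prod_encode (j,i) + 3)|} = fset {|u,v|}"
    by (simp add: atom_def)
  then have "{num 0, num 1, num 2} \<subseteq> {u,v}" by auto
  moreover have "num 0 \<noteq> num 1" "num 0 \<noteq> num 2" "num 1 \<noteq> num 2" by (auto dest: num_inj)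
  ultimately show False by auto
qed

lemma pair_eq: "HF {|u, v|} = HF {|u', v'|} \<Longrightarrow> (u = u' \<and> v = v') \<or> (u = v' \<and> v = u')"
proof -
  assume "HF {|u, v|} = HF {|u', v'|}"
  then have "fset {|u,v|} = fset {|u',v'|}" by simp
  then have "{u,v} = {u',v'}" by simp
  then show ?thesis by (simp add: doubleton_eq_iff)
qed


locale G =
  fixes P :: "'p set" and T :: "'p set \<Rightarrow> 'p set" and r :: "'p rel"
  assumes tg: "tgraph P T" and finP: "finite P" and acc: "accessible P T"
    and topo: "topological_order P T r"
begin

lemma r_trans: "(a,b) \<in> r \<Longrightarrow> (b,c) \<in> r \<Longrightarrow> (a,c) \<in> r"
  using topo unfolding topological_order_def strict_linear_order_on_def trans_def by blast
lemma r_irrefl: "(a,a) \<notin> r"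
  using topo unfolding topological_order_def strict_linear_order_on_def irrefl_on_def by blast
lemma r_total: "a \<in> P \<Longrightarrow> b \<in> P \<Longrightarrow> a \<noteq> b \<Longrightarrow> (a,b) \<in> r \<or> (b,a) \<in> r"
  using topo unfolding topological_order_def strict_linear_order_on_def total_on_def by blast
lemma r_sub: "r \<subseteq> P \<times> P"
  using topo unfolding topological_order_def by blast

lemma max_ex: "finite S \<Longrightarrow> S \<noteq> {} \<Longrightarrow> S \<subseteq> P \<Longrightarrow> \<exists>m\<in>S. \<forall>s\<in>S. s = m \<or> (s,m) \<in> r"
proof (induction S rule: finite_ne_induct)
  case (singleton x) then show ?case by simp
next
  case (insert x F)
  then obtain m where m: "m \<in> F" "\<forall>s\<in>F. s = m \<or> (s,m) \<in> r" by auto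
  show ?case
  proof (cases "(x,m) \<in> r \<or> x = m")
    case True then show ?thesis using m by auto
  next
    case False
    have "x \<in> P" "m \<in> P" using insert m by auto
    then have mx: "(m,x) \<in> r" using r_total[of x m] False by auto
    have "\<forall>s\<in>insert x F. s = x \<or> (s,x) \<in> r"
    proof
      fix s assume "s \<in> insert x F"
      then show "s = x \<or> (s,x) \<in> r"
      proof
        assume "s \<in> F"
        then have "s = m \<or> (s,m) \<in> r" using m by blast
        then show ?thesis using mx r_trans[of s m x] by blast
      qed simp
    qed
    then show ?thesis by blast
  qed
qed

lemma max_wrt: assumes "finite S" "S \<noteq> {}" "S \<subseteq> P"
  shows "max_wrt r S \<in> S \<and> (\<forall>s\<in>S. s = max_wrt r S \<or> (s, max_wrt r S) \<in> r)"
proof -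
  obtain m where m: "m \<in> S" "\<forall>s\<in>S. s = m \<or> (s,m) \<in> r" using max_ex[OF assms] by blast
  have "\<exists>!m. m \<in> S \<and> (\<forall>s\<in>S. s = m \<or> (s,m) \<in> r)"
  proof (rule ex1I[of _ m])
    show "m \<in> S \<and> (\<forall>s\<in>S. s = m \<or> (s,m) \<in> r)" using m by blast
  next
    fix m' assume "m' \<in> S \<and> (\<forall>s\<in>S. s = m' \<or> (s,m') \<in> r)"
    then have "m' = m \<or> (m',m) \<in> r" "m = m' \<or> (m,m') \<in> r" using m by auto
    then show "m' = m" using r_trans[of m m' m] r_irrefl[of m] by blast
  qed
  then show ?thesis unfolding max_wrt_def by (rule theI')
qed

lemma node_in: "a \<in> P \<Longrightarrow> b \<in> P \<Longrightarrow> {a,b} \<in> nodes P"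
  unfolding nodes_def tens_def by blast

lemma T_sub: "a \<in> P \<Longrightarrow> b \<in> P \<Longrightarrow> T {a,b} \<subseteq> P"
  using tg node_in[of a b] unfolding tgraph_def by blast

lemma maxT_in: "a \<in> P \<Longrightarrow> b \<in> P \<Longrightarrow> T {a,b} \<noteq> {} \<Longrightarrow> max_wrt r (T {a,b}) \<in> T {a,b}"
proof -
  assume h: "a \<in> P" "b \<in> P" "T {a,b} \<noteq> {}"
  have "T {a,b} \<subseteq> P" using h T_sub by blast
  moreover then have "finite (T {a,b})" using finP finite_subset by blast
  ultimately show ?thesis using max_wrt[of "T {a,b}"] h by blast
qed

lemma below_maxT: assumes "a \<in> P" "b \<in> P" "T {a,b} \<noteq> {}"
  shows "(a, max_wrt r (T {a,b})) \<in> r \<and> (b, max_wrt r (T {a,b})) \<in> r"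
proof -
  have "tens_node P T {a,b}" using assms node_in[of a b] unfolding tens_node_def by blast
  then have 1: "(max_wrt r {a,b}, max_wrt r (T {a,b})) \<in> r" using topo unfolding topological_order_def by blast
  have "\<forall>s\<in>{a,b}. s = max_wrt r {a,b} \<or> (s, max_wrt r {a,b}) \<in> r"
    using max_wrt[of "{a,b}"] assms by simp
  then have "a = max_wrt r {a,b} \<or> (a, max_wrt r {a,b}) \<in> r" "b = max_wrt r {a,b} \<or> (b, max_wrt r {a,b}) \<in> r" by auto
  then show ?thesis using 1 r_trans[of a "max_wrt r {a,b}" "max_wrt r (T {a,b})"]
      r_trans[of b "max_wrt r {a,b}" "max_wrt r (T {a,b})"] by auto
qed

primrec stage :: "nat \<Rightarrow> 'p set" where
  "stage 0 = {p. source_place P T p}"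
| "stage (Suc k) = stage k \<union> {q. \<exists>a\<in>P. \<exists>b\<in>P. a \<in> stage k \<and> b \<in> stage k \<and> q \<in> T {a,b}}"

lemma stage_mono: "k \<le> l \<Longrightarrow> stage k \<subseteq> stage l"
  by (rule lift_Suc_mono_le[of stage]) auto

lemma acc_stage: "p \<in> accessible_places P T \<Longrightarrow> \<exists>k. p \<in> stage k"
proof (induction rule: accessible_places.induct)
  case (src p) then show ?case by (intro exI[of _ 0]) simp
next
  case (step A q)
  then obtain a b where ab: "A = {a,b}" "a \<in> P" "b \<in> P" unfolding nodes_def tens_def by blast
  have "a \<in> A" "b \<in> A" using ab by auto
  then obtain ka kb where "a \<in> stage ka" "b \<in> stage kb" using step.IH by meson
  then have "a \<in> stage (max ka kb)" "b \<in> stage (max ka kb)"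
    using stage_mono[of ka "max ka kb"] stage_mono[of kb "max ka kb"] by auto
  then have "q \<in> stage (Suc (max ka kb))" using step(3) ab by auto
  then show ?case by blast
qed

definition depth :: "'p \<Rightarrow> nat" where "depth p = (LEAST k. p \<in> stage k)"

lemma depth_in: "p \<in> P \<Longrightarrow> p \<in> stage (depth p)"
proof -
  assume "p \<in> P"
  then have "p \<in> accessible_places P T" using acc unfolding accessible_def by blast
  then obtain k where "p \<in> stage k" using acc_stage by blast
  then show ?thesis unfolding depth_def by (rule LeastI)
qed

lemma depth_le: "p \<in> stage k \<Longrightarrow> depth p \<le> k"
  unfolding depth_def by (rule Least_le)

lemma depth0: assumes "p \<in> P" shows "depth p = 0 \<longleftrightarrow> source_place P T p"
proof
  assume "depth p = 0"
  then have "p \<in> stage 0" using depth_in assms by metis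
  then show "source_place P T p" by simp
next
  assume "source_place P T p"
  then have "p \<in> stage 0" by simp
  then show "depth p = 0" using depth_le[of p 0] by simp
qed

lemma depth_pos: assumes "p \<in> P" "depth p \<noteq> 0"
  shows "\<exists>a\<in>P. \<exists>b\<in>P. p \<in> T {a,b} \<and> depth a < depth p \<and> depth b < depth p"
proof -
  obtain d where d: "depth p = Suc d" using assms(2) not0_implies_Suc by blast
  have "p \<notin> stage d"
  proof
    assume "p \<in> stage d" then have "depth p \<le> d" by (rule depth_le)
    then show False using d by simp
  qed
  moreover have "p \<in> stage (Suc d)" using depth_in[OF assms(1)] d by simp
  ultimately obtain a b where "a \<in> P" "b \<in> P" "a \<in> stage d" "b \<in> stage d" "p \<in> T {a,b}" by auto
  moreover have "depth a < depth p" "depth b < depth p"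
    using depth_le[of a d] depth_le[of b d] d \<open>a \<in> stage d\<close> \<open>b \<in> stage d\<close> by auto
  ultimately show ?thesis by blast
qed

definition ab :: "'p \<Rightarrow> 'p \<times> 'p" where
  "ab p = (SOME x. fst x \<in> P \<and> snd x \<in> P \<and> p \<in> T {fst x, snd x} \<and> depth (fst x) < depth p \<and> depth (snd x) < depth p)"

lemma ab: assumes "p \<in> P" "depth p \<noteq> 0"
  shows "fst (ab p) \<in> P \<and> snd (ab p) \<in> P \<and> p \<in> T {fst (ab p), snd (ab p)} \<and> depth (fst (ab p)) < depth p \<and> depth (snd (ab p)) < depth p"
proof -
  obtain a b where "a\<in>P" "b\<in>P" "p \<in> T {a,b} \<and> depth a < depth p \<and> depth b < depth p"
    using depth_pos[OF assms] by blast
  then have "\<exists>x. fst x \<in> P \<and> snd x \<in> P \<and> p \<in> T {fst x, snd x} \<and> depth (fst x) < depth p \<and> depth (snd x) < depth p"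
    by (intro exI[of _ "(a,b)"]) simp
  then show ?thesis unfolding ab_def by (rule someI_ex)
qed


definition idx :: "'p \<Rightarrow> nat" where
  "idx = (SOME f. f ` P = {i. i < card P} \<and> inj_on f P)"

lemma idx_prop: "idx ` P = {i. i < card P} \<and> inj_on idx P"
proof -
  obtain f m where fm: "f ` P = {i::nat. i < m}" "inj_on f P" using finite_imp_inj_to_nat_seg[OF finP] by blast
  then have "card P = m" using card_image[OF fm(2)] by simp
  then have "\<exists>f. f ` P = {i. i < card P} \<and> inj_on f P" using fm by blast
  then show ?thesis unfolding idx_def by (rule someI_ex)
qed

lemma idx_lt: "p \<in> P \<Longrightarrow> idx p < card P"
  using idx_prop by blast

lemma idx_inj: "p \<in> P \<Longrightarrow> q \<in> P \<Longrightarrow> idx p = idx q \<Longrightarrow> p = q"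
  using idx_prop unfolding inj_on_def by blast

definition cc :: "'p \<Rightarrow> nat \<Rightarrow> nat" where "cc t i = idx t + card P * i"

primrec sf :: "nat \<Rightarrow> 'p \<Rightarrow> nat \<Rightarrow> hf" where
  "sf 0 t i = atom (idx t) i"
| "sf (Suc k) t i = (if depth t = 0 then atom (idx t) i
      else HF {| sf k (fst (ab t)) (cc t i), sf k (snd (ab t)) (cc t i) |})"

definition seed :: "'p \<Rightarrow> nat \<Rightarrow> hf" where "seed t i = sf (depth t) t i"

lemma sf_stable: "t \<in> P \<Longrightarrow> depth t \<le> k \<Longrightarrow> sf k t i = seed t i"
proof (induction k arbitrary: t i rule: less_induct)
  case (less k)
  show ?case
  proof (cases "depth t = 0")
    case True
    then show ?thesis by (cases k) (simp_all add: seed_def)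
  next
    case False
    obtain k' where k': "k = Suc k'" using False less.prems by (cases k) auto
    obtain d where d: "depth t = Suc d" using False not0_implies_Suc by blast
    have H: "fst (ab t) \<in> P \<and> snd (ab t) \<in> P \<and> depth (fst (ab t)) < depth t \<and> depth (snd (ab t)) < depth t"
      using ab[OF less.prems(1) False] by blast
    have "sf k t i = HF {| sf k' (fst (ab t)) (cc t i), sf k' (snd (ab t)) (cc t i) |}"
      using k' False by simp
    also have "\<dots> = HF {| seed (fst (ab t)) (cc t i), seed (snd (ab t)) (cc t i) |}"
      using less.IH[of k'] H k' d less.prems(2) by simp
    also have "\<dots> = HF {| sf d (fst (ab t)) (cc t i), sf d (snd (ab t)) (cc t i) |}"
      using less.IH[of d] H k' d less.prems(2) by simp
    also have "\<dots> = seed t i" using d False by (simp add: seed_def)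
    finally show ?thesis .
  qed
qed

lemma seed_eq: "t \<in> P \<Longrightarrow> depth t \<noteq> 0 \<Longrightarrow>
  seed t i = HF {| seed (fst (ab t)) (cc t i), seed (snd (ab t)) (cc t i) |}"
proof -
  assume h: "t \<in> P" "depth t \<noteq> 0"
  obtain d where d: "depth t = Suc d" using h not0_implies_Suc by blast
  have H: "fst (ab t) \<in> P \<and> snd (ab t) \<in> P \<and> depth (fst (ab t)) < depth t \<and> depth (snd (ab t)) < depth t"
    using ab[OF h] by blast
  have "seed t i = HF {| sf d (fst (ab t)) (cc t i), sf d (snd (ab t)) (cc t i) |}"
    using d by (simp add: seed_def)
  then show ?thesis using sf_stable H d by simp
qed

lemma seed_atom: "depth t = 0 \<Longrightarrow> seed t i = atom (idx t) i"
  by (simp add: seed_def)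

definition DD :: nat where "DD = Max (depth ` P)"
definition N :: "'p \<Rightarrow> nat" where "N t = card P ^ (DD - depth t)"

lemma cardP_pos: "p \<in> P \<Longrightarrow> 0 < card P"
  using finP card_gt_0_iff by blast

lemma N_pos: "p \<in> P \<Longrightarrow> 0 < N p"
  unfolding N_def using cardP_pos by simp

lemma cc_bound: assumes "t \<in> P" "i < N t" "a \<in> P" "depth a < depth t"
  shows "cc t i < N a"
proof -
  let ?n = "card P"
  have n1: "1 \<le> ?n" using cardP_pos assms by (simp add: Suc_le_eq)
  have "depth t \<le> DD" unfolding DD_def using finP assms(1) by simp
  then have e: "Suc (DD - depth t) \<le> DD - depth a" using assms(4) by simp
  have "cc t i < ?n * Suc i" unfolding cc_def using idx_lt[OF assms(1)] by simp
  also have "\<dots> \<le> ?n * N t" using assms(2) by (intro mult_le_mono2) (simp add: Suc_le_eq)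
  also have "\<dots> = ?n ^ Suc (DD - depth t)" unfolding N_def by simp
  also have "\<dots> \<le> ?n ^ (DD - depth a)" by (rule power_increasing[OF e n1])
  finally show ?thesis unfolding N_def .
qed

definition seeds :: "'p \<Rightarrow> hf set" where "seeds t = seed t ` {..<N t}"
definition Dset :: "hf set" where "Dset = (\<Union>t\<in>P. seeds t)"

definition bulk :: "('p \<Rightarrow> hf set) \<Rightarrow> 'p \<Rightarrow> hf set" where
  "bulk g p = {HF {|u,v|} | a b u v. a \<in> P \<and> b \<in> P \<and> T {a,b} \<noteq> {} \<and> max_wrt r (T {a,b}) = p
      \<and> (a,p) \<in> r \<and> (b,p) \<in> r \<and> u \<in> g a \<and> v \<in> g b}"

definition Fs :: "('p \<Rightarrow> hf set) \<Rightarrow> 'p \<Rightarrow> hf set" where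
  "Fs g p = seeds p \<union> (bulk g p - Dset)"

definition sigma :: "'p \<Rightarrow> hf set" where "sigma = wfrec r Fs"

lemma wf_r: "wf r"
proof (rule finite_acyclic_wf)
  show "finite r" using r_sub finP by (meson finite_SigmaI finite_subset)
  have "trans r" using topo unfolding topological_order_def strict_linear_order_on_def by blast
  then have "r\<^sup>+ = r" by (rule trancl_id)
  then show "acyclic r" unfolding acyclic_def using r_irrefl by simp
qed

lemma sigma_eq: "sigma p = seeds p \<union> (bulk sigma p - Dset)"
proof -
  have "sigma p = Fs (cut sigma r p) p" unfolding sigma_def by (rule wfrec[OF wf_r])
  moreover have "bulk (cut sigma r p) p = bulk sigma p"
  proof
    show "bulk (cut sigma r p) p \<subseteq> bulk sigma p"
    proof
      fix x assume "x \<in> bulk (cut sigma r p) p"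
      then obtain a b u v where h: "x = HF {|u,v|}" "a \<in> P" "b \<in> P" "T {a,b} \<noteq> {}" "max_wrt r (T {a,b}) = p"
        "(a,p) \<in> r" "(b,p) \<in> r" "u \<in> cut sigma r p a" "v \<in> cut sigma r p b"
        unfolding bulk_def by blast
      then have "u \<in> sigma a" "v \<in> sigma b" by (simp_all add: cut_apply)
      then show "x \<in> bulk sigma p" using h unfolding bulk_def by blast
    qed
    show "bulk sigma p \<subseteq> bulk (cut sigma r p) p"
    proof
      fix x assume "x \<in> bulk sigma p"
      then obtain a b u v where h: "x = HF {|u,v|}" "a \<in> P" "b \<in> P" "T {a,b} \<noteq> {}" "max_wrt r (T {a,b}) = p"
        "(a,p) \<in> r" "(b,p) \<in> r" "u \<in> sigma a" "v \<in> sigma b"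
        unfolding bulk_def by blast
      then have "u \<in> cut sigma r p a" "v \<in> cut sigma r p b" by (simp_all add: cut_apply)
      then show "x \<in> bulk (cut sigma r p) p" using h unfolding bulk_def by blast
    qed
  qed
  ultimately show ?thesis unfolding Fs_def by simp
qed

lemma sigma_fin: "finite (sigma p)"
proof (induction p rule: wf_induct_rule[OF wf_r])
  case (1 p)
  let ?X = "\<Union>a\<in>{a\<in>P. (a,p) \<in> r}. sigma a"
  have fX: "finite ?X" using 1 finP by auto
  have "bulk sigma p \<subseteq> (\<lambda>(u,v). HF {|u,v|}) ` (?X \<times> ?X)"
    unfolding bulk_def by auto
  then have "finite (bulk sigma p)" using fX by (meson finite_SigmaI finite_imageI finite_subset)
  moreover have "finite (seeds p)" unfolding seeds_def by simp
  ultimately show ?case using sigma_eq[of p] by simp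
qed


lemma seed_in: "t \<in> P \<Longrightarrow> i < N t \<Longrightarrow> seed t i \<in> sigma t"
  using sigma_eq[of t] unfolding seeds_def by blast

lemma seeds_Dset: "t \<in> P \<Longrightarrow> seeds t \<subseteq> Dset"
  unfolding Dset_def by blast

lemma sigma_cases: assumes "w \<in> sigma p"
  shows "w \<in> seeds p \<or> (w \<notin> Dset \<and> (\<exists>a b u v. w = HF {|u,v|} \<and> a \<in> P \<and> b \<in> P \<and> T {a,b} \<noteq> {}
     \<and> max_wrt r (T {a,b}) = p \<and> u \<in> sigma a \<and> v \<in> sigma b))"
  using assms sigma_eq[of p] unfolding bulk_def by blast

lemma div_lemma: fixes x x' n i i' :: nat
  assumes "x < n" "x' < n" "x + n*i = x' + n*i'" shows "x = x' \<and> i = i'"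
proof -
  have e1: "(x + n*i) mod n = x" "(x' + n*i') mod n = x'" using assms(1,2) by simp_all
  have e2: "(x + n*i) div n = i" "(x' + n*i') div n = i'" using assms(1,2) by simp_all
  have "x = x'" using e1 assms(3) by metis
  moreover have "i = i'" using e2 assms(3) by metis
  ultimately show ?thesis by simp
qed

definition Inj :: "hf \<Rightarrow> bool" where
  "Inj w = (\<forall>t t' i i'. t \<in> P \<longrightarrow> t' \<in> P \<longrightarrow> i < N t \<longrightarrow> i' < N t' \<longrightarrow> seed t i = w \<longrightarrow> seed t' i' = w
      \<longrightarrow> t = t' \<and> i = i')"

definition Disj :: "hf \<Rightarrow> bool" where
  "Disj w = (\<forall>p q. p \<in> P \<longrightarrow> q \<in> P \<longrightarrow> w \<in> sigma p \<longrightarrow> w \<in> sigma q \<longrightarrow> p = q)"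

lemma seed_pair: assumes "t \<in> P" "depth t \<noteq> 0" "i < N t"
  shows "fst (ab t) \<in> P \<and> snd (ab t) \<in> P \<and> t \<in> T {fst (ab t), snd (ab t)} \<and>
    cc t i < N (fst (ab t)) \<and> cc t i < N (snd (ab t)) \<and>
    seed t i = HF {| seed (fst (ab t)) (cc t i), seed (snd (ab t)) (cc t i) |}"
  using ab[OF assms(1,2)] cc_bound[OF assms(1,3)] seed_eq[OF assms(1,2)] by blast

lemma inj_step: assumes IH: "\<And>y. y |\<in>| elts w \<Longrightarrow> Inj y" shows "Inj w"
  unfolding Inj_def
proof (intro allI impI)
  fix t t' i i' assume h: "t \<in> P" "t' \<in> P" "i < N t" "i' < N t'" "seed t i = w" "seed t' i' = w"
  show "t = t' \<and> i = i'"
  proof (cases "depth t = 0")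
    case True
    then have w: "w = atom (idx t) i" using h seed_atom by simp
    show ?thesis
    proof (cases "depth t' = 0")
      case True
      then have "atom (idx t) i = atom (idx t') i'" using h seed_atom w by simp
      then show ?thesis using atom_inj idx_inj h by blast
    next
      case False
      then show ?thesis using seed_pair[OF h(2) False h(4)] h w atom_not_pair by metis
    qed
  next
    case False
    note A = seed_pair[OF h(1) False h(3)]
    show ?thesis
    proof (cases "depth t' = 0")
      case True
      then show ?thesis using A h seed_atom atom_not_pair by metis
    next
      case F': False
      note B = seed_pair[OF h(2) F' h(4)]
      have "seed (fst (ab t)) (cc t i) |\<in>| elts w" using A h by auto
      then have I: "Inj (seed (fst (ab t)) (cc t i))" by (rule IH)
      have "HF {| seed (fst (ab t)) (cc t i), seed (snd (ab t)) (cc t i) |}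
          = HF {| seed (fst (ab t')) (cc t' i'), seed (snd (ab t')) (cc t' i') |}" using A B h by simp
      then have "seed (fst (ab t)) (cc t i) = seed (fst (ab t')) (cc t' i') \<or>
                 seed (fst (ab t)) (cc t i) = seed (snd (ab t')) (cc t' i')" using pair_eq by blast
      then have "cc t i = cc t' i'"
      proof
        assume e: "seed (fst (ab t)) (cc t i) = seed (fst (ab t')) (cc t' i')"
        have "fst (ab t) = fst (ab t') \<and> cc t i = cc t' i'"
          by (rule I[unfolded Inj_def, rule_format]) (use A B e in simp_all)
        then show ?thesis by simp
      next
        assume e: "seed (fst (ab t)) (cc t i) = seed (snd (ab t')) (cc t' i')"
        have "fst (ab t) = snd (ab t') \<and> cc t i = cc t' i'"
          by (rule I[unfolded Inj_def, rule_format]) (use A B e in simp_all)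
        then show ?thesis by simp
      qed
      then have "idx t = idx t' \<and> i = i'" unfolding cc_def using div_lemma idx_lt h by blast
      then show ?thesis using idx_inj h by blast
    qed
  qed
qed

lemma sig_D: "p \<in> P \<Longrightarrow> w \<in> sigma p \<Longrightarrow> w \<in> Dset \<Longrightarrow> w \<in> seeds p"
  using sigma_cases by blast

lemma disj_step: assumes IH: "\<And>y. y |\<in>| elts w \<Longrightarrow> Disj y" and I: "Inj w" shows "Disj w"
  unfolding Disj_def
proof (intro allI impI)
  fix p q assume h: "p \<in> P" "q \<in> P" "w \<in> sigma p" "w \<in> sigma q"
  show "p = q"
  proof (cases "w \<in> Dset")
    case True
    then have "w \<in> seeds p" "w \<in> seeds q" using sig_D h by blast+
    obtain i where "i < N p" "seed p i = w" using \<open>w \<in> seeds p\<close> unfolding seeds_def by auto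
    moreover obtain i' where "i' < N q" "seed q i' = w" using \<open>w \<in> seeds q\<close> unfolding seeds_def by auto
    ultimately show ?thesis using I[unfolded Inj_def, rule_format, of p q i i'] h by blast
  next
    case False
    have "w \<notin> seeds p" "w \<notin> seeds q" using False seeds_Dset h by blast+
    then obtain a b u v a' b' u' v' where
      A: "w = HF {|u,v|}" "a \<in> P" "b \<in> P" "max_wrt r (T {a,b}) = p" "u \<in> sigma a" "v \<in> sigma b" and
      B: "w = HF {|u',v'|}" "a' \<in> P" "b' \<in> P" "max_wrt r (T {a',b'}) = q" "u' \<in> sigma a'" "v' \<in> sigma b'"
      using sigma_cases[OF h(3)] sigma_cases[OF h(4)] by blast
    have Du: "Disj u" "Disj v" using IH A by auto
    have "(u = u' \<and> v = v') \<or> (u = v' \<and> v = u')" using A B pair_eq by simp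
    then have "{a,b} = {a',b'}"
    proof
      assume "u = u' \<and> v = v'"
      then have "a = a'" "b = b'" using Du(1)[unfolded Disj_def, rule_format, of a a'] Du(2)[unfolded Disj_def, rule_format, of b b'] A B by blast+
      then show ?thesis by simp
    next
      assume "u = v' \<and> v = u'"
      then have "a = b'" "b = a'" using Du(1)[unfolded Disj_def, rule_format, of a b'] Du(2)[unfolded Disj_def, rule_format, of b a'] A B by blast+
      then show ?thesis by auto
    qed
    then show ?thesis using A B by simp
  qed
qed

lemma QQ: "Inj w \<and> Disj w"
proof (induction w rule: hf.induct)
  case (HF x)
  have IH: "\<And>y. y |\<in>| elts (HF x) \<Longrightarrow> Inj y \<and> Disj y" using HF.IH by simp
  have i: "Inj (HF x)" by (rule inj_step) (use IH in blast)
  have "Disj (HF x)" by (rule disj_step) (use IH i in blast)+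
  then show ?case using i by blast
qed

lemma disj: "p \<in> P \<Longrightarrow> q \<in> P \<Longrightarrow> w \<in> sigma p \<Longrightarrow> w \<in> sigma q \<Longrightarrow> p = q"
  using QQ[of w] unfolding Disj_def by blast

lemma sigma_ne: "p \<in> P \<Longrightarrow> sigma p \<noteq> {}"
proof -
  assume "p \<in> P"
  then have "seed p 0 \<in> sigma p" using seed_in[of p 0] N_pos[of p] by simp
  then show ?thesis by blast
qed

lemma struct: assumes "t \<in> P" "\<not> source_place P T t" "w \<in> sigma t"
  shows "\<exists>a b u v. a \<in> P \<and> b \<in> P \<and> t \<in> T {a,b} \<and> u \<in> sigma a \<and> v \<in> sigma b \<and> w = HF {|u,v|}"
proof (cases "w \<in> seeds t")
  case True
  then obtain i where i: "i < N t" "w = seed t i" unfolding seeds_def by blast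
  have "depth t \<noteq> 0" using depth0 assms by blast
  note A = seed_pair[OF assms(1) this i(1)]
  then show ?thesis using i seed_in[of "fst (ab t)" "cc t i"] seed_in[of "snd (ab t)" "cc t i"] by blast
next
  case False
  then obtain a b u v where "w = HF {|u,v|}" "a \<in> P" "b \<in> P" "T {a,b} \<noteq> {}" "max_wrt r (T {a,b}) = t"
    "u \<in> sigma a" "v \<in> sigma b" using sigma_cases[OF assms(3)] by blast
  then show ?thesis using maxT_in by metis
qed

lemma close: assumes "a \<in> P" "b \<in> P" "T {a,b} \<noteq> {}" "u \<in> sigma a" "v \<in> sigma b"
  shows "\<exists>t\<in>T {a,b}. HF {|u,v|} \<in> sigma t"
proof (cases "HF {|u,v|} \<in> Dset")
  case False
  let ?p = "max_wrt r (T {a,b})"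
  have "HF {|u,v|} \<in> bulk sigma ?p"
    unfolding bulk_def using assms below_maxT[OF assms(1-3)] by blast
  then have "HF {|u,v|} \<in> sigma ?p" using False sigma_eq[of ?p] by blast
  then show ?thesis using maxT_in[OF assms(1-3)] by blast
next
  case True
  then obtain t i where ti: "t \<in> P" "i < N t" "HF {|u,v|} = seed t i" unfolding Dset_def seeds_def by blast
  have "depth t \<noteq> 0" using ti seed_atom atom_not_pair by metis
  note A = seed_pair[OF ti(1) this ti(2)]
  let ?a = "fst (ab t)" and ?b = "snd (ab t)"
  have S: "seed ?a (cc t i) \<in> sigma ?a" "seed ?b (cc t i) \<in> sigma ?b" using A seed_in by blast+
  have "(u = seed ?a (cc t i) \<and> v = seed ?b (cc t i)) \<or> (u = seed ?b (cc t i) \<and> v = seed ?a (cc t i))"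
    using pair_eq A ti by metis
  then have "{a,b} = {?a,?b}"
  proof
    assume "u = seed ?a (cc t i) \<and> v = seed ?b (cc t i)"
    then have "a = ?a" "b = ?b" using disj S assms A by blast+
    then show ?thesis by simp
  next
    assume "u = seed ?b (cc t i) \<and> v = seed ?a (cc t i)"
    then have "a = ?b" "b = ?a" using disj S assms A by blast+
    then show ?thesis by auto
  qed
  then have "t \<in> T {a,b}" using A by simp
  moreover have "HF {|u,v|} \<in> sigma t" using ti seed_in by simp
  ultimately show ?thesis by blast
qed


definition U :: "'p set \<Rightarrow> hf set" where "U A = (\<Union>p\<in>A. sigma p)"

lemma U_fin: "A \<subseteq> P \<Longrightarrow> finite (U A)"
  unfolding U_def using sigma_fin finP finite_subset by blast

lemma U_diff: "B \<subseteq> P \<Longrightarrow> C \<subseteq> P \<Longrightarrow> U (B - C) = U B - U C"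
  unfolding U_def using disj by blast

lemma U_neq: assumes "A \<subseteq> P" "B \<subseteq> P" "A \<noteq> B" shows "U A \<noteq> U B"
proof -
  have "\<exists>p. (p \<in> A \<and> p \<notin> B) \<or> (p \<in> B \<and> p \<notin> A)" using assms(3) by blast
  then obtain p where p: "(p \<in> A \<and> p \<notin> B) \<or> (p \<in> B \<and> p \<notin> A)" by blast
  then have "p \<in> P" using assms by blast
  then obtain w where w: "w \<in> sigma p" using sigma_ne by blast
  show ?thesis
  proof
    assume e: "U A = U B"
    from p show False
    proof
      assume p1: "p \<in> A \<and> p \<notin> B"
      then have "w \<in> U B" using e w unfolding U_def by blast
      then obtain q where "q \<in> B" "w \<in> sigma q" unfolding U_def by blast
      then show False using disj[of p q w] p1 w assms \<open>p \<in> P\<close> by blast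
    next
      assume p1: "p \<in> B \<and> p \<notin> A"
      then have "w \<in> U A" using e w unfolding U_def by blast
      then obtain q where "q \<in> A" "w \<in> sigma q" unfolding U_def by blast
      then show False using disj[of p q w] p1 w assms \<open>p \<in> P\<close> by blast
    qed
  qed
qed

lemma U_tens: assumes "A \<subseteq> P" "B \<subseteq> P" "C \<subseteq> P"
  and c1: "\<forall>u\<in>B. \<forall>v\<in>C. T {u, v} \<noteq> {} \<and> T {u, v} \<subseteq> A"
  and c2: "A \<subseteq> \<Union>(T ` tens B C)"
  and c3: "\<Union>(T ` (nodes P - tens B C)) \<inter> A = {}"
  shows "U A = {HF {|u,v|} | u v. u \<in> U B \<and> v \<in> U C}"
proof
  show "{HF {|u,v|} | u v. u \<in> U B \<and> v \<in> U C} \<subseteq> U A"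
  proof
    fix w assume "w \<in> {HF {|u,v|} | u v. u \<in> U B \<and> v \<in> U C}"
    then obtain u v a b where h: "w = HF {|u,v|}" "a \<in> B" "b \<in> C" "u \<in> sigma a" "v \<in> sigma b"
      unfolding U_def by blast
    have "T {a,b} \<noteq> {}" "T {a,b} \<subseteq> A" using c1 h by blast+
    moreover have "a \<in> P" "b \<in> P" using h assms by blast+
    ultimately obtain t where "t \<in> T {a,b}" "HF {|u,v|} \<in> sigma t" using close h by blast
    then show "w \<in> U A" using h \<open>T {a,b} \<subseteq> A\<close> unfolding U_def by blast
  qed
next
  show "U A \<subseteq> {HF {|u,v|} | u v. u \<in> U B \<and> v \<in> U C}"
  proof
    fix w assume "w \<in> U A"
    then obtain t where t: "t \<in> A" "w \<in> sigma t" unfolding U_def by blast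
    then obtain b0 c0 where bc: "b0 \<in> B" "c0 \<in> C" "t \<in> T {b0,c0}" using c2 unfolding tens_def by blast
    have "{b0,c0} \<in> nodes P" using bc assms node_in by blast
    then have "\<not> source_place P T t" using bc unfolding source_place_def by blast
    moreover have "t \<in> P" using t assms by blast
    ultimately obtain a b u v where s: "a \<in> P" "b \<in> P" "t \<in> T {a,b}" "u \<in> sigma a" "v \<in> sigma b" "w = HF {|u,v|}"
      using struct t by blast
    have "{a,b} \<in> tens B C"
    proof (rule ccontr)
      assume "{a,b} \<notin> tens B C"
      then have "{a,b} \<in> nodes P - tens B C" using node_in s by blast
      then show False using c3 s t by blast
    qed
    then obtain b1 c1 where bc1: "b1 \<in> B" "c1 \<in> C" "{a,b} = {b1,c1}" unfolding tens_def by blast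
    then have "(a = b1 \<and> b = c1) \<or> (a = c1 \<and> b = b1)" by (simp add: doubleton_eq_iff)
    then show "w \<in> {HF {|u,v|} | u v. u \<in> U B \<and> v \<in> U C}"
    proof
      assume "a = b1 \<and> b = c1"
      then have "u \<in> U B" "v \<in> U C" using s bc1 unfolding U_def by blast+
      then show ?thesis using s by blast
    next
      assume "a = c1 \<and> b = b1"
      then have "v \<in> U B" "u \<in> U C" using s bc1 unfolding U_def by blast+
      moreover have "w = HF {|v,u|}" using s by (simp add: finsert_commute)
      ultimately show ?thesis by blast
    qed
  qed
qed

lemma satisfies: assumes "fulfilling P T F \<Phi>"
  shows "hf_satisfies (\<lambda>x. mk (U (F x \<inter> P))) \<Phi>"
  unfolding hf_satisfies_def
proof
  fix l assume l: "l \<in> set \<Phi>"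
  let ?M = "\<lambda>x. mk (U (F x \<inter> P))"
  have sub: "\<And>x. x \<in> lit_vars l \<Longrightarrow> F x \<subseteq> P" using assms l unfolding fulfilling_def Vars_def by blast
  have fl: "fulfills_lit P T F l" using assms l unfolding fulfilling_def by blast
  have E: "\<And>x. x \<in> lit_vars l \<Longrightarrow> fset (elts (?M x)) = U (F x)"
  proof -
    fix x assume "x \<in> lit_vars l"
    then have "F x \<subseteq> P" by (rule sub)
    then have "F x \<inter> P = F x" by blast
    then show "fset (elts (?M x)) = U (F x)" using elts_mk U_fin \<open>F x \<subseteq> P\<close> by simp
  qed
  show "hf_sat_lit ?M l"
  proof (cases l)
    case (LUn x y z)
    have "U (F x) = U (F y) \<union> U (F z)" using fl LUn unfolding U_def by simp
    then show ?thesis using E LUn by (simp add: hf_eqI elts_hunion)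
  next
    case (LDiff x y z)
    have "U (F x) = U (F y) - U (F z)" using fl LDiff U_diff sub by simp
    then show ?thesis using E LDiff by (simp add: hf_eqI elts_hdiff)
  next
    case (LTens x y z)
    have "U (F x) = {HF {|u,v|} | u v. u \<in> U (F y) \<and> v \<in> U (F z)}"
      using fl LTens sub by (intro U_tens) auto
    then show ?thesis using E LTens by (simp add: hf_eqI elts_htens)
  next
    case (LNeq x y)
    have "U (F x) \<noteq> U (F y)" using fl LNeq sub U_neq by simp
    then show ?thesis using E LNeq by (metis hf_sat_lit.simps(4) insertCI lit_vars.simps(4))
  qed
qed

end

theorem lemma15:
  fixes \<Phi> :: "'v conj" and P :: "'p set" and T :: "'p set \<Rightarrow> 'p set"
  assumes "tgraph P T"
    and "finite P"
    and "accessible P T"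
    and "\<exists>r. topological_order P T r"
    and "graph_fulfills P T \<Phi>"
  shows "\<exists>M :: 'v \<Rightarrow> hf. hf_satisfies M \<Phi>"
proof -
  obtain r where r: "topological_order P T r" using assms(4) by blast
  obtain F where F: "fulfilling P T F \<Phi>" using assms(5) unfolding graph_fulfills_def by blast
  interpret G P T r using assms(1-3) r by unfold_locales
  show ?thesis using satisfies[OF F] by blast
qed

end
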